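(* Let $m\in\mathbb{N}$ and $f_1,\dots,f_m\in C[0,1]$. Let $q'=P/Q$, where $P(x)=p(f_1(x),\dots,f_m(x))$ and $Q(x)=q(f_1(x),\dots,f_m(x))$ for real polynomials $p,q$ in $m$ variables, and where $Q(x)\neq0$ for all $x\in[0,1]$. Then $$\overline{\dim}_B G(q')\le \max_{1\le i\le m}\overline{\dim}_B G(f_i).$$
   Context: $C[0,1]$ is the space of real-valued continuous functions on $[0,1]$; $G(h)=\{(x,h(x)):x\in[0,1]\}\subset\mathbb{R}^2$ is the graph of $h$. For a nonempty bounded set $F$, $N_\delta(F)$ is the smallest number of sets of diameter at most $\delta$ covering $F$, and $\overline{\dim}_B F=\limsup_{\delta\to0}\frac{\log N_\delta(F)}{-\log\delta}$. *)

theory Defs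
  imports "HOL-Analysis.Analysis"
begin

definition real_poly_fun :: "nat \<Rightarrow> ((nat \<Rightarrow> real) \<Rightarrow> real) \<Rightarrow> bool" where
  "real_poly_fun m p \<longleftrightarrow>
     (\<exists>A :: (nat \<Rightarrow> nat) set. \<exists>c :: (nat \<Rightarrow> nat) \<Rightarrow> real. finite A \<and>
        (\<forall>y. p y = (\<Sum>\<alpha>\<in>A. c \<alpha> * (\<Prod>i<m. y i ^ \<alpha> i))))"

definition graph01 :: "(real \<Rightarrow> real) \<Rightarrow> (real \<times> real) set" where
  "graph01 h = (\<lambda>x. (x, h x)) ` {0..1}"

definition cover_num :: "real \<Rightarrow> 'a::metric_space set \<Rightarrow> nat" where
  "cover_num \<delta> F = (LEAST n. \<exists>C. finite C \<and> card C = n \<and>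
      (\<forall>S\<in>C. bounded S \<and> diameter S \<le> \<delta>) \<and> F \<subseteq> \<Union>C)"

definition upper_box_dim :: "'a::metric_space set \<Rightarrow> ereal" where
  "upper_box_dim F = Limsup (at_right 0) (\<lambda>\<delta>. ereal (ln (real (cover_num \<delta> F)) / (- ln \<delta>)))"

end

theory Submission
  imports Defs "HOL-Real_Asymp.Real_Asymp"
begin

lemma interval_cover:
  fixes c :: "'s \<Rightarrow> real"
  assumes "finite J" "{a..b} \<subseteq> (\<Union>S\<in>J. {c S - r .. c S + r})" "a \<le> b" "r \<ge> 0"
  shows "b - a \<le> 2*r*card J"
proof -
  have "b - a = measure lborel {a..b}" using assms by simp
  also have "\<dots> \<le> measure lborel (\<Union>S\<in>J. {c S - r .. c S + r})"
    apply (rule measure_mono_fmeasurable)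
    using assms by (auto intro!: fmeasurable_compact)
  also have "\<dots> \<le> (\<Sum>S\<in>J. measure lborel {c S - r .. c S + r})"
    by (rule measure_UNION_le) (use assms in auto)
  also have "\<dots> = 2*r*card J" using assms by simp
  finally show ?thesis .
qed

lemma cover_num_le:
  assumes "finite C" "\<forall>S\<in>C. bounded S \<and> diameter S \<le> \<delta>" "F \<subseteq> \<Union>C"
  shows "cover_num \<delta> F \<le> card C"
  unfolding cover_num_def by (rule Least_le) (use assms in blast)

lemma cover_num_ex:
  assumes "finite C" "\<forall>S\<in>C. bounded S \<and> diameter S \<le> \<delta>" "F \<subseteq> \<Union>C"
  shows "\<exists>C'. finite C' \<and> card C' = cover_num \<delta> F \<and> (\<forall>S\<in>C'. bounded S \<and> diameter S \<le> \<delta>) \<and> F \<subseteq> \<Union>C'"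
proof -
  have "\<exists>n C. finite C \<and> card C = n \<and> (\<forall>S\<in>C. bounded S \<and> diameter S \<le> \<delta>) \<and> F \<subseteq> \<Union>C"
    using assms by blast
  from LeastI_ex[OF this, folded cover_num_def] show ?thesis by blast
qed

definition col :: "real \<Rightarrow> nat \<Rightarrow> real set" where
  "col \<delta> k = {real k * (\<delta>/2) .. real (Suc k) * (\<delta>/2)} \<inter> {0..1}"

definition ncol :: "real \<Rightarrow> nat" where
  "ncol \<delta> = nat \<lceil>2/\<delta>\<rceil>"

lemma col_sub: "col \<delta> k \<subseteq> {0..1}" unfolding col_def by auto

lemma col_connected: "connected (col \<delta> k)"
  unfolding col_def by (simp add: Int_atLeastAtMost)

lemma ncol_pos: "\<delta> > 0 \<Longrightarrow> ncol \<delta> \<ge> 1"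
  unfolding ncol_def by (simp add: Suc_le_eq)

lemma col_left:
  assumes "\<delta> > 0" "k < ncol \<delta>"
  shows "real k * (\<delta>/2) \<in> col \<delta> k"
proof -
  have "real k < 2/\<delta>" using assms unfolding ncol_def by linarith
  hence "real k * (\<delta>/2) < 1" using assms by (simp add: field_simps)
  thus ?thesis using assms unfolding col_def by auto
qed

lemma col_cover:
  assumes "\<delta> > 0" "x \<in> {0..1}"
  shows "\<exists>k<ncol \<delta>. x \<in> col \<delta> k"
proof -
  define w where "w = \<delta>/2"
  have w: "w > 0" using assms w_def by simp
  define n where "n = ncol \<delta>"
  have n: "real n \<ge> 1/w" "n \<ge> 1" using ncol_pos[OF assms(1)] unfolding n_def ncol_def w_def using assms by auto
  show ?thesis
  proof (cases "nat \<lfloor>x/w\<rfloor> < n")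
    case True
    let ?k = "nat \<lfloor>x/w\<rfloor>"
    have "real ?k \<le> x/w" "x/w < real ?k + 1" using assms w by auto
    hence "real ?k * w \<le> x" "x \<le> real (Suc ?k) * w" using w by (auto simp: field_simps)
    thus ?thesis using True assms unfolding col_def n_def w_def by auto
  next
    case False
    have "x/w \<ge> 0" using assms w by simp
    hence "real (nat \<lfloor>x/w\<rfloor>) \<le> x/w" by linarith
    hence "x/w \<ge> n" using False by linarith
    hence "x \<ge> n * w" using w by (simp add: field_simps)
    moreover have "n * w \<ge> 1" using n w by (simp add: field_simps)
    ultimately have x1: "x = 1" "n * w = 1" using assms by auto
    have "real (n-1) * w \<le> 1" using n x1 w by (simp add: of_nat_diff algebra_simps)
    moreover have "real (Suc (n-1)) * w = 1" using n x1 by simp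
    ultimately have "x \<in> col \<delta> (n-1)" using x1 unfolding col_def w_def by auto
    moreover have "n - 1 < ncol \<delta>" using n unfolding n_def by simp
    ultimately show ?thesis by blast
  qed
qed

lemma lower_col_aux:
  assumes "\<delta> > 0" "continuous_on {0..1} g" "finite C"
    "\<forall>S\<in>C. bounded S \<and> diameter S \<le> \<delta>" "graph01 g \<subseteq> \<Union>C"
    "x \<in> col \<delta> k" "y \<in> col \<delta> k" "g x \<le> g y"
  shows "g y - g x \<le> 2*\<delta>*card {S\<in>C. S \<inter> (\<lambda>x. (x, g x)) ` col \<delta> k \<noteq> {}}"
proof -
  let ?J = "{S\<in>C. S \<inter> (\<lambda>x. (x, g x)) ` col \<delta> k \<noteq> {}}"
  define c where "c S = snd (SOME s. s \<in> S)" for S :: "(real\<times>real) set"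
  have conn: "connected (g ` col \<delta> k)"
    by (rule connected_continuous_image[OF continuous_on_subset[OF assms(2) col_sub] col_connected])
  have "{g x .. g y} \<subseteq> g ` col \<delta> k"
    by (rule connected_contains_Icc[OF conn]) (use assms in auto)
  also have "\<dots> \<subseteq> (\<Union>S\<in>?J. {c S - \<delta> .. c S + \<delta>})"
  proof
    fix t assume "t \<in> g ` col \<delta> k"
    then obtain z where z: "z \<in> col \<delta> k" "t = g z" by auto
    have "(z, g z) \<in> graph01 g" using z col_sub unfolding graph01_def by auto
    then obtain S where S: "S \<in> C" "(z, g z) \<in> S" using assms(5) by auto
    hence SJ: "S \<in> ?J" using z by auto
    have s0: "(SOME s. s \<in> S) \<in> S" using S by (meson someI)
    have "dist (z, g z) (SOME s. s \<in> S) \<le> diameter S"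
      by (rule diameter_bounded_bound) (use S s0 assms(4) in auto)
    hence "dist (g z) (c S) \<le> \<delta>" unfolding c_def
      using dist_snd_le[of "(z, g z)" "SOME s. s \<in> S"] S assms(4) by force
    hence "t \<in> {c S - \<delta> .. c S + \<delta>}" using z by (auto simp: dist_real_def)
    thus "t \<in> (\<Union>S\<in>?J. {c S - \<delta> .. c S + \<delta>})" using SJ by blast
  qed
  finally have "{g x .. g y} \<subseteq> (\<Union>S\<in>?J. {c S - \<delta> .. c S + \<delta>})" .
  from interval_cover[OF _ this] show ?thesis using assms by auto
qed

lemma lower_col:
  assumes "\<delta> > 0" "continuous_on {0..1} g" "finite C"
    "\<forall>S\<in>C. bounded S \<and> diameter S \<le> \<delta>" "graph01 g \<subseteq> \<Union>C"
    "x \<in> col \<delta> k" "y \<in> col \<delta> k"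
  shows "\<bar>g x - g y\<bar> \<le> 2*\<delta>*card {S\<in>C. S \<inter> (\<lambda>x. (x, g x)) ` col \<delta> k \<noteq> {}}"
proof (cases "g x \<le> g y")
  case True thus ?thesis using lower_col_aux[OF assms(1-5) assms(6,7)] by simp
next
  case False thus ?thesis using lower_col_aux[OF assms(1-5) assms(7,6)] by simp
qed

lemma col_meet_ge1:
  assumes "\<delta> > 0" "k < ncol \<delta>" "graph01 g \<subseteq> \<Union>C" "finite C"
  shows "card {S\<in>C. S \<inter> (\<lambda>x. (x, g x)) ` col \<delta> k \<noteq> {}} \<ge> 1"
proof -
  let ?z = "real k * (\<delta>/2)"
  have z: "?z \<in> col \<delta> k" by (rule col_left[OF assms(1,2)])
  hence "(?z, g ?z) \<in> graph01 g" using col_sub unfolding graph01_def by auto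
  then obtain S where "S \<in> C" "(?z, g ?z) \<in> S" using assms by auto
  hence "S \<in> {S\<in>C. S \<inter> (\<lambda>x. (x, g x)) ` col \<delta> k \<noteq> {}}" using z by auto
  hence "{S\<in>C. S \<inter> (\<lambda>x. (x, g x)) ` col \<delta> k \<noteq> {}} \<noteq> {}" by blast
  thus ?thesis using assms by (simp add: Suc_le_eq card_gt_0_iff)
qed

lemma meet_close:
  assumes "\<delta> > 0" "bounded S" "diameter S \<le> \<delta>"
    "S \<inter> (\<lambda>x. (x, g x)) ` col \<delta> k \<noteq> {}" "S \<inter> (\<lambda>x. (x, g x)) ` col \<delta> j \<noteq> {}"
  shows "k \<le> j + 3"
proof -
  obtain x where x: "x \<in> col \<delta> k" "(x, g x) \<in> S" using assms(4) by auto
  obtain y where y: "y \<in> col \<delta> j" "(y, g y) \<in> S" using assms(5) by auto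
  have "dist (x, g x) (y, g y) \<le> \<delta>"
    using diameter_bounded_bound[OF assms(2) x(2) y(2)] assms(3) by linarith
  hence "\<bar>x - y\<bar> \<le> \<delta>" using dist_fst_le[of "(x, g x)" "(y, g y)"] by (simp add: dist_real_def)
  moreover have "x \<ge> real k * (\<delta>/2)" "y \<le> real (Suc j) * (\<delta>/2)"
    using x y unfolding col_def by auto
  ultimately have "real k * (\<delta>/2) \<le> (real j + 3) * (\<delta>/2)" by (simp add: algebra_simps)
  hence "real k \<le> real j + 3" using assms(1) by (simp add: mult_le_cancel_right)
  thus ?thesis by linarith
qed

lemma card_le4:
  assumes "finite K" "\<And>k j. k \<in> K \<Longrightarrow> j \<in> K \<Longrightarrow> k \<le> j + (3::nat)"
  shows "card K \<le> 4"
proof (cases "K = {}")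
  case True thus ?thesis by simp
next
  case False
  let ?k0 = "Min K"
  have "K \<subseteq> {?k0 .. ?k0 + 3}"
    using assms False Min_le Min_in by fastforce
  hence "card K \<le> card {?k0 .. ?k0 + 3}" by (rule card_mono[rotated]) simp
  thus ?thesis by simp
qed

lemma col_count:
  assumes "\<delta> > 0" "finite C" "\<forall>S\<in>C. bounded S \<and> diameter S \<le> \<delta>"
  shows "(\<Sum>k<ncol \<delta>. card {S\<in>C. S \<inter> (\<lambda>x. (x, g x)) ` col \<delta> k \<noteq> {}}) \<le> 4 * card C"
proof -
  let ?P = "\<lambda>S k. S \<inter> (\<lambda>x. (x, g x)) ` col \<delta> k \<noteq> {}"
  have "(\<Sum>k<ncol \<delta>. card {S\<in>C. ?P S k}) = (\<Sum>k<ncol \<delta>. \<Sum>S\<in>C. if ?P S k then 1 else 0)"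
    using assms(2) by (simp add: sum.inter_filter[symmetric])
  also have "\<dots> = (\<Sum>S\<in>C. \<Sum>k<ncol \<delta>. if ?P S k then 1 else 0)" by (rule sum.swap)
  also have "\<dots> = (\<Sum>S\<in>C. card {k\<in>{..<ncol \<delta>}. ?P S k})"
    by (simp add: sum.inter_filter[symmetric])
  also have "\<dots> \<le> (\<Sum>S\<in>C. 4)"
  proof (rule sum_mono)
    fix S assume S: "S \<in> C"
    show "card {k\<in>{..<ncol \<delta>}. ?P S k} \<le> 4"
    proof (rule card_le4)
      fix k j assume "k \<in> {k\<in>{..<ncol \<delta>}. ?P S k}" "j \<in> {k\<in>{..<ncol \<delta>}. ?P S k}"
      thus "k \<le> j + 3" using meet_close[OF assms(1), of S g k j] S assms(3) by auto
    qed simp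
  qed
  finally show ?thesis by simp
qed

lemma box_diam:
  assumes "\<delta> > 0"
  shows "diameter (col \<delta> k \<times> {a .. a + \<delta>/2}) \<le> \<delta>"
proof (rule diameter_le)
  show "col \<delta> k \<times> {a .. a + \<delta>/2} \<noteq> {} \<or> 0 \<le> \<delta>" using assms by simp
  fix u v assume u: "u \<in> col \<delta> k \<times> {a .. a + \<delta>/2}" and v: "v \<in> col \<delta> k \<times> {a .. a + \<delta>/2}"
  have uv: "fst u \<in> col \<delta> k" "fst v \<in> col \<delta> k" "snd u \<in> {a .. a + \<delta>/2}" "snd v \<in> {a .. a + \<delta>/2}"
    using u v by (auto simp: mem_Times_iff)
  have "real k * (\<delta>/2) \<le> fst u" "fst u \<le> real (Suc k) * (\<delta>/2)"
    "real k * (\<delta>/2) \<le> fst v" "fst v \<le> real (Suc k) * (\<delta>/2)"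
    using uv(1,2) unfolding col_def by auto
  moreover have "real (Suc k) * (\<delta>/2) = real k * (\<delta>/2) + \<delta>/2" by (simp add: algebra_simps)
  ultimately have "fst u - fst v \<le> \<delta>/2" "fst v - fst u \<le> \<delta>/2" by linarith+
  moreover have "snd u - snd v \<le> \<delta>/2" "snd v - snd u \<le> \<delta>/2" using uv(3,4) by auto
  ultimately have "\<bar>fst u - fst v\<bar> \<le> \<delta>/2 \<and> \<bar>snd u - snd v\<bar> \<le> \<delta>/2"
    by (intro conjI abs_leI) linarith+
  moreover have "norm (u - v) \<le> \<bar>fst u - fst v\<bar> + \<bar>snd u - snd v\<bar>"
    using norm_Pair_le[of "fst u - fst v" "snd u - snd v"] by (cases u; cases v) simp
  ultimately show "norm (u - v) \<le> \<delta>" by linarith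
qed

lemma upper_cover:
  assumes "\<delta> > 0" "\<And>k. k < ncol \<delta> \<Longrightarrow> R k \<ge> 0"
    "\<And>k x. k < ncol \<delta> \<Longrightarrow> x \<in> col \<delta> k \<Longrightarrow> \<bar>h x - h (real k * (\<delta>/2))\<bar> \<le> R k"
  shows "\<exists>C. finite C \<and> (\<forall>S\<in>C. bounded S \<and> diameter S \<le> \<delta>) \<and> graph01 h \<subseteq> \<Union>C
           \<and> real (card C) \<le> (\<Sum>k<ncol \<delta>. 4 * R k / \<delta> + 2)"
proof -
  define w where "w = \<delta>/2"
  have w: "w > 0" using assms w_def by simp
  define c where "c k = h (real k * w) - R k" for k
  define M where "M k = nat \<lceil>2 * R k / w\<rceil> + 1" for k
  define B where "B k j = col \<delta> k \<times> {c k + real j * w .. c k + real j * w + w}" for k j :: nat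
  define C where "C = (\<Union>k<ncol \<delta>. B k ` {..<M k})"
  have fin: "finite C" unfolding C_def by auto
  have bd: "\<forall>S\<in>C. bounded S \<and> diameter S \<le> \<delta>"
  proof
    fix S assume "S \<in> C"
    then obtain k j where S: "S = B k j" unfolding C_def by auto
    have "bounded (col \<delta> k)" by (rule bounded_subset[OF _ col_sub]) simp
    hence "bounded S" unfolding S B_def by (intro bounded_Times) auto
    moreover have "diameter S \<le> \<delta>" unfolding S B_def w_def using box_diam[OF assms(1)] by simp
    ultimately show "bounded S \<and> diameter S \<le> \<delta>" by blast
  qed
  have cov: "graph01 h \<subseteq> \<Union>C"
  proof
    fix p assume "p \<in> graph01 h"
    then obtain x where x: "x \<in> {0..1}" "p = (x, h x)" unfolding graph01_def by auto
    obtain k where k: "k < ncol \<delta>" "x \<in> col \<delta> k" using col_cover[OF assms(1) x(1)] by blast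
    have hb: "\<bar>h x - h (real k * w)\<bar> \<le> R k" using assms(3)[OF k] unfolding w_def .
    define t where "t = (h x - c k) / w"
    have hc: "h x - c k \<ge> 0" "h x - c k \<le> 2 * R k" using hb unfolding c_def abs_le_iff by linarith+
    have t0: "t \<ge> 0" "t \<le> 2 * R k / w" using hc w unfolding t_def by (auto intro: divide_right_mono)
    define j where "j = nat \<lfloor>t\<rfloor>"
    have j: "real j \<le> t" "t < real j + 1" using t0 unfolding j_def by linarith+
    have jM: "j < M k" using t0 j unfolding M_def j_def by linarith
    have "c k + real j * w \<le> h x" "h x \<le> c k + real j * w + w"
      using j w unfolding t_def by (auto simp: field_simps)
    hence "p \<in> B k j" using x k unfolding B_def by auto
    thus "p \<in> \<Union>C" using k jM unfolding C_def by blast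
  qed
  have "card C \<le> (\<Sum>k<ncol \<delta>. card (B k ` {..<M k}))" unfolding C_def by (rule card_UN_le) simp
  also have "\<dots> \<le> (\<Sum>k<ncol \<delta>. M k)" by (intro sum_mono order.trans[OF card_image_le]) simp_all
  finally have "real (card C) \<le> (\<Sum>k<ncol \<delta>. real (M k))" by (simp flip: of_nat_sum)
  also have "\<dots> \<le> (\<Sum>k<ncol \<delta>. 4 * R k / \<delta> + 2)"
  proof (rule sum_mono)
    fix k assume "k \<in> {..<ncol \<delta>}"
    hence "R k \<ge> 0" using assms(2) by simp
    hence "real (M k) \<le> 2 * R k / w + 2" unfolding M_def using w by (simp add: of_nat_nat) linarith
    thus "real (M k) \<le> 4 * R k / \<delta> + 2" unfolding w_def by simp
  qed
  finally show ?thesis using fin bd cov by blast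
qed

lemma cover_exists:
  assumes "\<delta> > 0" "\<And>x. x \<in> {0..1} \<Longrightarrow> \<bar>h x\<bar> \<le> B"
  shows "\<exists>C. finite C \<and> (\<forall>S\<in>C. bounded S \<and> diameter S \<le> \<delta>) \<and> graph01 h \<subseteq> \<Union>C"
proof -
  have "B \<ge> 0" using assms(2)[of 0] by auto
  have "\<And>k x. k < ncol \<delta> \<Longrightarrow> x \<in> col \<delta> k \<Longrightarrow> \<bar>h x - h (real k * (\<delta>/2))\<bar> \<le> 2 * B"
  proof -
    fix k x assume "k < ncol \<delta>" "x \<in> col \<delta> k"
    hence "x \<in> {0..1}" "real k * (\<delta>/2) \<in> {0..1}" using col_left[OF assms(1)] col_sub by blast+
    thus "\<bar>h x - h (real k * (\<delta>/2))\<bar> \<le> 2 * B" using assms(2)[of x] assms(2)[of "real k * (\<delta>/2)"] by linarith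
  qed
  moreover have "\<And>k. k < ncol \<delta> \<Longrightarrow> 0 \<le> 2*B" using \<open>B \<ge> 0\<close> by simp
  ultimately obtain C where "finite C \<and> (\<forall>S\<in>C. bounded S \<and> diameter S \<le> \<delta>) \<and> graph01 h \<subseteq> \<Union>C"
    using upper_cover[of \<delta> "\<lambda>_. 2*B" h, OF assms(1)] by meson
  thus ?thesis by blast
qed

definition domi :: "nat \<Rightarrow> (nat \<Rightarrow> real \<Rightarrow> real) \<Rightarrow> (real \<Rightarrow> real) \<Rightarrow> bool" where
  "domi m f h \<longleftrightarrow> (\<exists>L\<ge>0. \<forall>x\<in>{0..1}. \<forall>y\<in>{0..1}. \<bar>h x - h y\<bar> \<le> L * (\<Sum>i<m. \<bar>f i x - f i y\<bar>))"

definition bnd :: "nat \<Rightarrow> (nat \<Rightarrow> real \<Rightarrow> real) \<Rightarrow> bool" where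
  "bnd m f \<longleftrightarrow> (\<exists>B. \<forall>i<m. \<forall>x\<in>{0..1}. \<bar>f i x\<bar> \<le> B)"

lemma domi_bounded:
  assumes "bnd m f" "domi m f h"
  shows "\<exists>B\<ge>0. \<forall>x\<in>{0..1}. \<bar>h x\<bar> \<le> B"
proof -
  obtain B where B: "\<forall>i<m. \<forall>x\<in>{0..1}. \<bar>f i x\<bar> \<le> B" using assms(1) unfolding bnd_def by blast
  obtain L where L: "L \<ge> 0" "\<forall>x\<in>{0..1}. \<forall>y\<in>{0..1}. \<bar>h x - h y\<bar> \<le> L * (\<Sum>i<m. \<bar>f i x - f i y\<bar>)"
    using assms(2) unfolding domi_def by blast
  have "\<forall>x\<in>{0..1}. \<bar>h x\<bar> \<le> \<bar>h 0\<bar> + L * (real m * (2*B))"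
  proof
    fix x :: real assume x: "x \<in> {0..1}"
    have "(\<Sum>i<m. \<bar>f i x - f i 0\<bar>) \<le> real (card {..<m}) * (2*B)"
    proof (rule sum_bounded_above)
      fix i assume "i \<in> {..<m}"
      thus "\<bar>f i x - f i 0\<bar> \<le> 2*B" using B x by (smt (verit) atLeastAtMost_iff lessThan_iff)
    qed
    hence "L * (\<Sum>i<m. \<bar>f i x - f i 0\<bar>) \<le> L * (real m * (2*B))" using L(1) by (simp add: mult_left_mono)
    moreover have "\<bar>h x - h 0\<bar> \<le> L * (\<Sum>i<m. \<bar>f i x - f i 0\<bar>)" using L(2) x by simp
    ultimately show "\<bar>h x\<bar> \<le> \<bar>h 0\<bar> + L * (real m * (2*B))" by linarith
  qed
  hence "\<forall>x\<in>{0..1}. \<bar>h x\<bar> \<le> max 0 (\<bar>h 0\<bar> + L * (real m * (2*B)))" by force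
  thus ?thesis by (intro exI[of _ "max 0 (\<bar>h 0\<bar> + L * (real m * (2*B)))"]) auto
qed

lemma domi_const: "domi m f (\<lambda>x. c)"
  unfolding domi_def by (intro exI[of _ 0]) auto

lemma domi_f: "i < m \<Longrightarrow> domi m f (f i)"
  unfolding domi_def
  by (intro exI[of _ 1]) (auto intro!: member_le_sum[of i "{..<m}" "\<lambda>i. \<bar>f i _ - f i _\<bar>"])

lemma domi_add:
  assumes "domi m f g" "domi m f h"
  shows "domi m f (\<lambda>x. g x + h x)"
proof -
  obtain L1 where L1: "L1 \<ge> 0" "\<forall>x\<in>{0..1}. \<forall>y\<in>{0..1}. \<bar>g x - g y\<bar> \<le> L1 * (\<Sum>i<m. \<bar>f i x - f i y\<bar>)"
    using assms(1) unfolding domi_def by blast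
  obtain L2 where L2: "L2 \<ge> 0" "\<forall>x\<in>{0..1}. \<forall>y\<in>{0..1}. \<bar>h x - h y\<bar> \<le> L2 * (\<Sum>i<m. \<bar>f i x - f i y\<bar>)"
    using assms(2) unfolding domi_def by blast
  show ?thesis unfolding domi_def
  proof (intro exI[of _ "L1 + L2"] conjI ballI)
    fix x y :: real assume xy: "x \<in> {0..1}" "y \<in> {0..1}"
    have "\<bar>(g x + h x) - (g y + h y)\<bar> \<le> \<bar>g x - g y\<bar> + \<bar>h x - h y\<bar>" by linarith
    also have "\<dots> \<le> L1 * (\<Sum>i<m. \<bar>f i x - f i y\<bar>) + L2 * (\<Sum>i<m. \<bar>f i x - f i y\<bar>)"
      using L1 L2 xy by (intro add_mono) auto
    finally show "\<bar>(g x + h x) - (g y + h y)\<bar> \<le> (L1 + L2) * (\<Sum>i<m. \<bar>f i x - f i y\<bar>)"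
      by (simp add: algebra_simps)
  qed (use L1 L2 in auto)
qed

lemma domi_mult:
  assumes "bnd m f" "domi m f g" "domi m f h"
  shows "domi m f (\<lambda>x. g x * h x)"
proof -
  obtain L1 where L1: "L1 \<ge> 0" "\<forall>x\<in>{0..1}. \<forall>y\<in>{0..1}. \<bar>g x - g y\<bar> \<le> L1 * (\<Sum>i<m. \<bar>f i x - f i y\<bar>)"
    using assms(2) unfolding domi_def by blast
  obtain L2 where L2: "L2 \<ge> 0" "\<forall>x\<in>{0..1}. \<forall>y\<in>{0..1}. \<bar>h x - h y\<bar> \<le> L2 * (\<Sum>i<m. \<bar>f i x - f i y\<bar>)"
    using assms(3) unfolding domi_def by blast
  obtain Bg where Bg: "Bg \<ge> 0" "\<forall>x\<in>{0..1}. \<bar>g x\<bar> \<le> Bg" using domi_bounded[OF assms(1,2)] by blast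
  obtain Bh where Bh: "Bh \<ge> 0" "\<forall>x\<in>{0..1}. \<bar>h x\<bar> \<le> Bh" using domi_bounded[OF assms(1,3)] by blast
  show ?thesis unfolding domi_def
  proof (intro exI[of _ "Bg * L2 + Bh * L1"] conjI ballI)
    fix x y :: real assume xy: "x \<in> {0..1}" "y \<in> {0..1}"
    let ?S = "(\<Sum>i<m. \<bar>f i x - f i y\<bar>)"
    have "g x * h x - g y * h y = g x * (h x - h y) + h y * (g x - g y)" by (simp add: algebra_simps)
    hence "\<bar>g x * h x - g y * h y\<bar> \<le> \<bar>g x\<bar> * \<bar>h x - h y\<bar> + \<bar>h y\<bar> * \<bar>g x - g y\<bar>"
      by (metis abs_mult abs_triangle_ineq)
    also have "\<dots> \<le> Bg * (L2 * ?S) + Bh * (L1 * ?S)"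
      using L1 L2 Bg Bh xy by (intro add_mono mult_mono) auto
    finally show "\<bar>g x * h x - g y * h y\<bar> \<le> (Bg * L2 + Bh * L1) * ?S"
      by (simp add: algebra_simps)
  qed (use L1 L2 Bg Bh in auto)
qed

lemma domi_sum:
  assumes "finite A" "\<And>a. a \<in> A \<Longrightarrow> domi m f (g a)"
  shows "domi m f (\<lambda>x. \<Sum>a\<in>A. g a x)"
  using assms by (induction A rule: finite_induct) (auto intro: domi_add domi_const)

lemma domi_prod:
  assumes "bnd m f" "finite A" "\<And>a. a \<in> A \<Longrightarrow> domi m f (g a)"
  shows "domi m f (\<lambda>x. \<Prod>a\<in>A. g a x)"
  using assms(2,3) by (induction A rule: finite_induct) (auto intro: domi_mult[OF assms(1)] domi_const)

lemma domi_power: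
  assumes "bnd m f" "domi m f h"
  shows "domi m f (\<lambda>x. h x ^ n)"
  by (induction n) (auto intro: domi_mult[OF assms(1) assms(2)] domi_const)

lemma domi_inverse:
  assumes "domi m f h" "c > 0" "\<And>x. x \<in> {0..1} \<Longrightarrow> \<bar>h x\<bar> \<ge> c"
  shows "domi m f (\<lambda>x. inverse (h x))"
proof -
  obtain L where L: "L \<ge> 0" "\<forall>x\<in>{0..1}. \<forall>y\<in>{0..1}. \<bar>h x - h y\<bar> \<le> L * (\<Sum>i<m. \<bar>f i x - f i y\<bar>)"
    using assms(1) unfolding domi_def by blast
  show ?thesis unfolding domi_def
  proof (intro exI[of _ "L / (c*c)"] conjI ballI)
    fix x y :: real assume xy: "x \<in> {0..1}" "y \<in> {0..1}"
    let ?S = "(\<Sum>i<m. \<bar>f i x - f i y\<bar>)"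
    have hx: "\<bar>h x\<bar> \<ge> c" and hy: "\<bar>h y\<bar> \<ge> c" using assms(3) xy by auto
    hence nz: "h x \<noteq> 0" "h y \<noteq> 0" using assms(2) by auto
    have "inverse (h x) - inverse (h y) = (h y - h x) / (h x * h y)"
      using nz by (simp add: field_simps)
    hence "\<bar>inverse (h x) - inverse (h y)\<bar> = \<bar>h x - h y\<bar> / (\<bar>h x\<bar> * \<bar>h y\<bar>)"
      by (simp add: abs_mult abs_minus_commute)
    also have "\<dots> \<le> \<bar>h x - h y\<bar> / (c * c)"
      using hx hy assms(2) by (intro divide_left_mono mult_mono) auto
    also have "\<dots> \<le> (L * ?S) / (c * c)"
      using L xy assms(2) by (intro divide_right_mono) auto
    finally show "\<bar>inverse (h x) - inverse (h y)\<bar> \<le> L / (c*c) * ?S" by simp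
  qed (use L assms(2) in auto)
qed

lemma poly_eval:
  assumes "real_poly_fun m p"
  obtains A c where "finite A" "\<And>x. p (\<lambda>i. f i x) = (\<Sum>\<alpha>\<in>A. c \<alpha> * (\<Prod>i<m. f i x ^ \<alpha> i))"
  using assms unfolding real_poly_fun_def by blast

lemma domi_poly:
  assumes "bnd m f" "real_poly_fun m p"
  shows "domi m f (\<lambda>x. p (\<lambda>i. f i x))"
proof -
  obtain A c where A: "finite A" "\<And>x. p (\<lambda>i. f i x) = (\<Sum>\<alpha>\<in>A. c \<alpha> * (\<Prod>i<m. f i x ^ \<alpha> i))"
    using poly_eval[OF assms(2)] by metis
  have "domi m f (\<lambda>x. \<Sum>\<alpha>\<in>A. c \<alpha> * (\<Prod>i<m. f i x ^ \<alpha> i))"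
    by (intro domi_sum A(1) domi_mult[OF assms(1)] domi_const domi_prod[OF assms(1)] domi_power[OF assms(1)] domi_f) auto
  thus ?thesis by (simp add: A(2))
qed

lemma cont_poly:
  assumes "real_poly_fun m p" "\<And>i. i < m \<Longrightarrow> continuous_on {0..1} (f i)"
  shows "continuous_on {0..1} (\<lambda>x. p (\<lambda>i. f i x))"
proof -
  obtain A c where A: "finite A" "\<And>x. p (\<lambda>i. f i x) = (\<Sum>\<alpha>\<in>A. c \<alpha> * (\<Prod>i<m. f i x ^ \<alpha> i))"
    using poly_eval[OF assms(1)] by metis
  have "continuous_on {0..1} (\<lambda>x. \<Sum>\<alpha>\<in>A. c \<alpha> * (\<Prod>i<m. f i x ^ \<alpha> i))"
    by (intro continuous_intros) (auto intro: assms(2))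
  thus ?thesis by (simp add: A(2))
qed

lemma main_bound:
  fixes f :: "nat \<Rightarrow> real \<Rightarrow> real" and F :: "real \<Rightarrow> real"
  assumes "m \<ge> 1" "\<And>i. i < m \<Longrightarrow> continuous_on {0..1} (f i)"
    "L \<ge> 0" "\<forall>x\<in>{0..1}. \<forall>y\<in>{0..1}. \<bar>F x - F y\<bar> \<le> L * (\<Sum>i<m. \<bar>f i x - f i y\<bar>)"
    "\<forall>i<m. \<forall>x\<in>{0..1}. \<bar>f i x\<bar> \<le> B" "\<delta> > 0"
  shows "real (cover_num \<delta> (graph01 F))
      \<le> (32 * L * real m + 8) * real (Max ((\<lambda>i. cover_num \<delta> (graph01 (f i))) ` {..<m}))"
proof -
  define n where "n = ncol \<delta>"
  define N where "N i = cover_num \<delta> (graph01 (f i))" for i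
  define Nmax where "Nmax = Max (N ` {..<m})"
  have NleMax: "\<And>i. i < m \<Longrightarrow> N i \<le> Nmax" unfolding Nmax_def by simp
  have "\<forall>i\<in>{..<m}. \<exists>C. finite C \<and> card C = N i \<and> (\<forall>S\<in>C. bounded S \<and> diameter S \<le> \<delta>) \<and> graph01 (f i) \<subseteq> \<Union>C"
  proof
    fix i assume i: "i \<in> {..<m}"
    have "\<exists>C. finite C \<and> (\<forall>S\<in>C. bounded S \<and> diameter S \<le> \<delta>) \<and> graph01 (f i) \<subseteq> \<Union>C"
      by (rule cover_exists[OF assms(6), of "f i" B]) (use assms(5) i in auto)
    then obtain C where "finite C" "\<forall>S\<in>C. bounded S \<and> diameter S \<le> \<delta>" "graph01 (f i) \<subseteq> \<Union>C" by blast
    from cover_num_ex[OF this] show "\<exists>C. finite C \<and> card C = N i \<and> (\<forall>S\<in>C. bounded S \<and> diameter S \<le> \<delta>) \<and> graph01 (f i) \<subseteq> \<Union>C"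
      unfolding N_def by blast
  qed
  then obtain CC where CC0: "\<forall>i\<in>{..<m}. finite (CC i) \<and> card (CC i) = N i \<and> (\<forall>S\<in>CC i. bounded S \<and> diameter S \<le> \<delta>) \<and> graph01 (f i) \<subseteq> \<Union>(CC i)"
    by (rule bchoice[elim_format]) blast
  have CCf: "\<And>i. i < m \<Longrightarrow> finite (CC i)" and CCc: "\<And>i. i < m \<Longrightarrow> card (CC i) = N i"
    and CCb: "\<And>i. i < m \<Longrightarrow> \<forall>S\<in>CC i. bounded S \<and> diameter S \<le> \<delta>"
    and CCg: "\<And>i. i < m \<Longrightarrow> graph01 (f i) \<subseteq> \<Union>(CC i)" using CC0 by auto
  define cnt where "cnt i k = card {S\<in>CC i. S \<inter> (\<lambda>x. (x, f i x)) ` col \<delta> k \<noteq> {}}" for i k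
  have lowr: "\<And>i k x y. i < m \<Longrightarrow> x \<in> col \<delta> k \<Longrightarrow> y \<in> col \<delta> k \<Longrightarrow> \<bar>f i x - f i y\<bar> \<le> 2*\<delta>*cnt i k"
    unfolding cnt_def by (rule lower_col[OF assms(6) assms(2) CCf CCb CCg])
  have csum: "\<And>i. i < m \<Longrightarrow> (\<Sum>k<n. cnt i k) \<le> 4 * N i"
    unfolding cnt_def n_def CCc[symmetric] by (rule col_count[OF assms(6) CCf CCb])
  have cge: "\<And>i k. i < m \<Longrightarrow> k < n \<Longrightarrow> cnt i k \<ge> 1"
    unfolding cnt_def n_def by (rule col_meet_ge1[OF assms(6) _ CCg CCf])
  define R where "R k = L * (\<Sum>i<m. 2*\<delta>*real (cnt i k))" for k
  have R0: "\<And>k. R k \<ge> 0" unfolding R_def using assms(3,6) by (intro mult_nonneg_nonneg sum_nonneg) auto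
  have RF: "\<And>k x. k < n \<Longrightarrow> x \<in> col \<delta> k \<Longrightarrow> \<bar>F x - F (real k * (\<delta>/2))\<bar> \<le> R k"
  proof -
    fix k x assume k: "k < n" and x: "x \<in> col \<delta> k"
    let ?z = "real k * (\<delta>/2)"
    have z: "?z \<in> col \<delta> k" using col_left[OF assms(6)] k unfolding n_def by blast
    have "\<bar>F x - F ?z\<bar> \<le> L * (\<Sum>i<m. \<bar>f i x - f i ?z\<bar>)" using assms(4) x z col_sub by blast
    also have "\<dots> \<le> R k" unfolding R_def using assms(3) lowr x z
      by (intro mult_left_mono sum_mono) auto
    finally show "\<bar>F x - F ?z\<bar> \<le> R k" .
  qed
  obtain C where C: "finite C" "\<forall>S\<in>C. bounded S \<and> diameter S \<le> \<delta>" "graph01 F \<subseteq> \<Union>C"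
      "real (card C) \<le> (\<Sum>k<n. 4 * R k / \<delta> + 2)"
  proof -
    have "\<exists>C. finite C \<and> (\<forall>S\<in>C. bounded S \<and> diameter S \<le> \<delta>) \<and> graph01 F \<subseteq> \<Union>C
           \<and> real (card C) \<le> (\<Sum>k<ncol \<delta>. 4 * R k / \<delta> + 2)"
      by (rule upper_cover[OF assms(6), of R F]) (use R0 RF in \<open>auto simp: n_def\<close>)
    thus ?thesis using that unfolding n_def by blast
  qed
  have "real (cover_num \<delta> (graph01 F)) \<le> real (card C)" using cover_num_le[OF C(1-3)] by simp
  also have "\<dots> \<le> (\<Sum>k<n. 4 * R k / \<delta> + 2)" by (rule C(4))
  also have "\<dots> = 8 * L * (\<Sum>i<m. real (\<Sum>k<n. cnt i k)) + 2 * real n"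
  proof -
    have "\<And>k. 4 * R k / \<delta> = 8 * L * (\<Sum>i<m. real (cnt i k))"
      unfolding R_def using assms(6) by (simp add: sum_distrib_left[symmetric] field_simps)
    hence "(\<Sum>k<n. 4 * R k / \<delta> + 2) = (\<Sum>k<n. 8 * L * (\<Sum>i<m. real (cnt i k))) + 2 * real n"
      by (simp add: sum.distrib)
    also have "\<dots> = 8 * L * (\<Sum>i<m. real (\<Sum>k<n. cnt i k)) + 2 * real n"
      by (simp add: sum_distrib_left[symmetric] sum.swap[of _ "{..<n}"])
    finally show ?thesis .
  qed
  also have "\<dots> \<le> 8 * L * (\<Sum>i<m. 4 * real Nmax) + 2 * (4 * real Nmax)"
  proof (intro add_mono mult_left_mono sum_mono)
    fix i assume "i \<in> {..<m}"
    hence "(\<Sum>k<n. cnt i k) \<le> 4 * Nmax" using csum NleMax by (meson lessThan_iff le_trans mult_le_mono2)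
    thus "real (\<Sum>k<n. cnt i k) \<le> 4 * real Nmax" by linarith
  next
    have "n = (\<Sum>k<n. 1)" by simp
    also have "\<dots> \<le> (\<Sum>k<n. cnt 0 k)" using cge assms(1) by (intro sum_mono) auto
    also have "\<dots> \<le> 4 * Nmax" using csum[of 0] NleMax[of 0] assms(1) by linarith
    finally show "real n \<le> 4 * real Nmax" by linarith
  qed (use assms(3) in auto)
  also have "\<dots> = (32 * L * real m + 8) * real Nmax" by (simp add: algebra_simps)
  finally show ?thesis unfolding Nmax_def N_def .
qed

lemma tends_aux: "((\<lambda>\<delta>::real. K0 / (- ln \<delta>)) \<longlongrightarrow> 0) (at_right 0)"
  by real_asymp

lemma limsup_step:
  fixes a :: "nat \<Rightarrow> real \<Rightarrow> real" and b :: "real \<Rightarrow> real"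
  assumes "m \<ge> 1" "\<And>\<delta>. \<delta> \<in> {0<..<1} \<Longrightarrow> \<exists>i<m. b \<delta> \<le> K0 / (- ln \<delta>) + a i \<delta>"
  shows "Limsup (at_right 0) (\<lambda>\<delta>. ereal (b \<delta>)) \<le> Max ((\<lambda>i. Limsup (at_right 0) (\<lambda>\<delta>. ereal (a i \<delta>))) ` {..<m})"
    (is "?L \<le> ?M")
proof (rule dense_ge)
  fix y assume My: "?M < y"
  show "?L \<le> y"
  proof (cases y)
    case PInf thus ?thesis by simp
  next
    case MInf thus ?thesis using My by simp
  next
    case (real z)
    obtain s where s: "?M < ereal s" "ereal s < ereal z" using My real ereal_dense2 by blast
    have "\<forall>i\<in>{..<m}. eventually (\<lambda>\<delta>. ereal (a i \<delta>) < ereal s) (at_right 0)"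
    proof
      fix i assume "i \<in> {..<m}"
      hence "Limsup (at_right 0) (\<lambda>\<delta>. ereal (a i \<delta>)) \<le> ?M" by simp
      hence "Limsup (at_right 0) (\<lambda>\<delta>. ereal (a i \<delta>)) < ereal s" using s by simp
      thus "eventually (\<lambda>\<delta>. ereal (a i \<delta>) < ereal s) (at_right 0)" by (rule Limsup_lessD)
    qed
    hence ev1: "eventually (\<lambda>\<delta>. \<forall>i\<in>{..<m}. a i \<delta> < s) (at_right 0)"
      using eventually_ball_finite[of "{..<m}"] by simp
    have "z - s > 0" using s by simp
    hence ev2: "eventually (\<lambda>\<delta>. K0 / (- ln \<delta>) < z - s) (at_right 0)"
      using order_tendstoD(2)[OF tends_aux] by blast
    have ev3: "eventually (\<lambda>\<delta>::real. \<delta> \<in> {0<..<1}) (at_right 0)"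
      by (rule eventually_at_right_real) simp
    have "eventually (\<lambda>\<delta>. ereal (b \<delta>) \<le> ereal z) (at_right 0)"
      using ev1 ev2 ev3
    proof eventually_elim
      case (elim \<delta>)
      then obtain i where i: "i < m" "b \<delta> \<le> K0 / (- ln \<delta>) + a i \<delta>" using assms(2) by blast
      have "a i \<delta> < s" using elim i by auto
      hence "b \<delta> < z" using elim(2) i(2) by linarith
      thus ?case by simp
    qed
    thus ?thesis unfolding real by (rule Limsup_bounded)
  qed
qed

theorem mainTheorem10:
  fixes m :: nat and f :: "nat \<Rightarrow> real \<Rightarrow> real"
    and p q :: "(nat \<Rightarrow> real) \<Rightarrow> real"
  assumes "m \<ge> 1"
    and "\<And>i. i < m \<Longrightarrow> continuous_on {0..1} (f i)"
    and "real_poly_fun m p" and "real_poly_fun m q"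
    and "\<And>x. x \<in> {0..1} \<Longrightarrow> q (\<lambda>i. f i x) \<noteq> 0"
  shows "upper_box_dim (graph01 (\<lambda>x. p (\<lambda>i. f i x) / q (\<lambda>i. f i x)))
           \<le> Max ((\<lambda>i. upper_box_dim (graph01 (f i))) ` {..<m})"
proof -
  define F where "F = (\<lambda>x. p (\<lambda>i. f i x) / q (\<lambda>i. f i x))"
  have "\<forall>i\<in>{..<m}. \<exists>B. \<forall>x\<in>{0..1}. \<bar>f i x\<bar> \<le> B"
  proof
    fix i assume "i \<in> {..<m}"
    hence "continuous_on {0..1} (\<lambda>x. \<bar>f i x\<bar>)" using assms(2) by (auto intro: continuous_intros)
    from continuous_attains_sup[OF compact_Icc _ this] show "\<exists>B. \<forall>x\<in>{0..1}. \<bar>f i x\<bar> \<le> B" by auto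
  qed
  then obtain Bf where Bf: "\<forall>i\<in>{..<m}. \<forall>x\<in>{0..1}. \<bar>f i x\<bar> \<le> Bf i"
    by (rule bchoice[elim_format]) blast
  define B where "B = (\<Sum>i<m. \<bar>Bf i\<bar>)"
  have Bb: "\<forall>i<m. \<forall>x\<in>{0..1}. \<bar>f i x\<bar> \<le> B"
  proof (intro allI impI ballI)
    fix i :: nat and x :: real assume i: "i < m" and x: "x \<in> {0..1}"
    have "\<bar>f i x\<bar> \<le> Bf i" using Bf i x by simp
    hence "\<bar>f i x\<bar> \<le> \<bar>Bf i\<bar>" by linarith
    also have "\<dots> \<le> B" unfolding B_def using i by (intro member_le_sum) auto
    finally show "\<bar>f i x\<bar> \<le> B" .
  qed
  hence bnd: "bnd m f" unfolding bnd_def by blast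
  have cq: "continuous_on {0..1} (\<lambda>x. \<bar>q (\<lambda>i. f i x)\<bar>)"
    using cont_poly[OF assms(4) assms(2)] by (auto intro: continuous_intros)
  obtain x0 where x0: "x0 \<in> {0..1}" "\<forall>y\<in>{0..1}. \<bar>q (\<lambda>i. f i x0)\<bar> \<le> \<bar>q (\<lambda>i. f i y)\<bar>"
    using continuous_attains_inf[OF compact_Icc _ cq] by auto
  define c where "c = \<bar>q (\<lambda>i. f i x0)\<bar>"
  have c: "c > 0" using assms(5)[OF x0(1)] unfolding c_def by simp
  have "domi m f (\<lambda>x. p (\<lambda>i. f i x) * inverse (q (\<lambda>i. f i x)))"
    by (intro domi_mult[OF bnd] domi_poly[OF bnd assms(3)] domi_inverse[OF domi_poly[OF bnd assms(4)] c])
       (use x0 in \<open>auto simp: c_def\<close>)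
  hence "domi m f F" unfolding F_def by (simp add: divide_inverse)
  then obtain L where L: "L \<ge> 0" "\<forall>x\<in>{0..1}. \<forall>y\<in>{0..1}. \<bar>F x - F y\<bar> \<le> L * (\<Sum>i<m. \<bar>f i x - f i y\<bar>)"
    unfolding domi_def by blast
  define K where "K = 32 * L * real m + 8"
  have K: "K \<ge> 1" unfolding K_def using L(1) by simp
  define a where "a i \<delta> = ln (real (cover_num \<delta> (graph01 (f i)))) / (- ln \<delta>)" for i and \<delta> :: real
  define b where "b \<delta> = ln (real (cover_num \<delta> (graph01 F))) / (- ln \<delta>)" for \<delta> :: real
  have step: "\<exists>i<m. b \<delta> \<le> ln K / (- ln \<delta>) + a i \<delta>" if d: "\<delta> \<in> {0<..<1}" for \<delta>
  proof -
    let ?N = "\<lambda>i. cover_num \<delta> (graph01 (f i))"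
    let ?NF = "cover_num \<delta> (graph01 F)"
    have mb: "real ?NF \<le> K * real (Max (?N ` {..<m}))"
      unfolding K_def using main_bound[OF assms(1,2) L Bb, of \<delta>] d by simp
    have z: "0 \<in> {..<m}" using assms(1) by simp
    have "Max (?N ` {..<m}) \<in> ?N ` {..<m}"
      by (rule Max_in) (use z in blast)+
    then obtain i0 where i0': "i0 \<in> {..<m}" "Max (?N ` {..<m}) = ?N i0" by (auto simp del: lessThan_iff)
    hence i0: "i0 < m" "Max (?N ` {..<m}) = ?N i0" by auto
    have lnd: "- ln \<delta> > 0" using d by simp
    have "ln (real ?NF) \<le> ln K + ln (real (?N i0))"
    proof (cases "?NF = 0")
      case True
      have "ln K \<ge> 0" using K by simp
      moreover have "ln (real (?N i0)) \<ge> 0" by (cases "?N i0 = 0") simp_all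
      ultimately show ?thesis using True by simp
    next
      case False
      hence "real ?NF > 0" by simp
      hence "0 < K * real (?N i0)" using mb i0 by simp
      hence pos: "real (?N i0) > 0" using K by (simp add: zero_less_mult_iff)
      have "ln (real ?NF) \<le> ln (K * real (?N i0))" using False mb i0 by simp
      also have "\<dots> = ln K + ln (real (?N i0))" using K pos by (simp add: ln_mult)
      finally show ?thesis .
    qed
    hence "b \<delta> \<le> (ln K + ln (real (?N i0))) / (- ln \<delta>)"
      unfolding b_def using lnd by (intro divide_right_mono) auto
    also have "\<dots> = ln K / (- ln \<delta>) + a i0 \<delta>" unfolding a_def by (simp add: add_divide_distrib)
    finally show ?thesis using i0 by blast
  qed
  have "Limsup (at_right 0) (\<lambda>\<delta>. ereal (b \<delta>)) \<le> Max ((\<lambda>i. Limsup (at_right 0) (\<lambda>\<delta>. ereal (a i \<delta>))) ` {..<m})"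
    by (rule limsup_step[OF assms(1) step])
  thus ?thesis unfolding upper_box_dim_def F_def[symmetric] a_def b_def .
qed

end
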